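(* Fix $p\in(1/2,1]$, $C\in\mathbb{R}$, $t>0$, and write $N(t)=\lfloor (p-q)(t-Ct^{1/2})\rfloor$. Consider three ASEPs coupled by the basic coupling: $x$ started from $x_n(0)=-n-N(t)$ ($n\ge1$), $x_n(0)=-n$ ($-N(t)\le n\le0$); $x^A$ started from $x^A_n(0)=-n-N(t)$ ($n\ge1$); $x^B$ started from $x^B_n(0)=-n$ ($n\ge -N(t)$). Let $y_n(s)=\min\{x^A_n(s),x^B_n(s)\}$. Then for all $n\ge1$ and $s\ge0$: in TASEP ($p=1$), $y_n(s)=x_n(s)$; in ASEP (any $p\in(1/2,1]$), $y_n(s)\ge x_n(s)$.
   Context: ASEP on $\mathbb{Z}$ with parameter $p\in(1/2,1]$, $q=1-p$; TASEP is $p=1$. Particles carry integer labels, $x_n(s)$ being the position at time $s$ of the particle labeled $n$, with $x_{n+1}(s)<x_n(s)$. Basic coupling: all processes are constructed from one common family of independent Poisson processes $(P^{i,i+1})_{i\in\mathbb{Z}}$ of rate $p$ and $(P^{i,i-1})_{i\in\mathbb{Z}}$ of rate $q$; whenever $P^{i,i\pm1}$ jumps, in each process a particle at $i$ moves to $i\pm1$ if that site is empty. *)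

theory Defs
  imports Complex_Main
begin

text \<open>A clock realization of the basic coupling is a pair of families of ring-time sets:
  R i = jump times of the Poisson process P^{i,i+1} (rate p),
  L i = jump times of the Poisson process P^{i,i-1} (rate q).\<close>

definition right_const :: "(real \<Rightarrow> int) \<Rightarrow> real \<Rightarrow> bool" where
  "right_const f t \<longleftrightarrow> (\<exists>\<epsilon>>0. \<forall>s\<in>{t..t+\<epsilon>}. f s = f t)"

definition has_left_val :: "(real \<Rightarrow> int) \<Rightarrow> real \<Rightarrow> int \<Rightarrow> bool" where
  "has_left_val f t v \<longleftrightarrow> (\<exists>\<epsilon>>0. \<forall>s\<in>{t-\<epsilon><..<t}. f s = v)"

definition left_val :: "(real \<Rightarrow> int) \<Rightarrow> real \<Rightarrow> int" where
  "left_val f t = (THE v. has_left_val f t v)"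

text \<open>Almost-sure properties of the family of independent Poisson clocks:
  ring times are positive, locally finite, no two clocks ring simultaneously, and
  (Harris condition) for every time horizon T there are bonds arbitrarily far to the
  left and to the right that carry no ring in [0,T].\<close>

definition clocks_ok :: "(int \<Rightarrow> real set) \<Rightarrow> (int \<Rightarrow> real set) \<Rightarrow> bool" where
  "clocks_ok R L \<longleftrightarrow>
     (\<forall>i. R i \<subseteq> {0<..} \<and> L i \<subseteq> {0<..}) \<and>
     (\<forall>i T. finite (R i \<inter> {0..T}) \<and> finite (L i \<inter> {0..T})) \<and>
     (\<forall>i j. i \<noteq> j \<longrightarrow> R i \<inter> R j = {} \<and> L i \<inter> L j = {}) \<and>
     (\<forall>i j. R i \<inter> L j = {}) \<and>
     (\<forall>T K. (\<exists>i\<le>K. (R i \<union> L (i+1)) \<inter> {0..T} = {}) \<and>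
            (\<exists>i\<ge>K. (R i \<union> L (i+1)) \<inter> {0..T} = {}))"

text \<open>X is a labeled ASEP trajectory (X n s = position of the particle labeled n at
  time s, labels in Lab) driven by the clocks R, L, started from x0: each X n is a
  right-continuous step function with left limits, and at each time t>0 the particle
  at site a (its position just before t) jumps to a+1 iff R a rings at t and a+1 was
  empty just before t, jumps to a-1 iff L a rings at t and a-1 was empty just before t,
  and otherwise stays.\<close>

definition asep_traj :: "(int \<Rightarrow> real set) \<Rightarrow> (int \<Rightarrow> real set) \<Rightarrow> int set \<Rightarrow>
    (int \<Rightarrow> int) \<Rightarrow> (int \<Rightarrow> real \<Rightarrow> int) \<Rightarrow> bool" where
  "asep_traj R L Lab x0 X \<longleftrightarrow>
     (\<forall>n\<in>Lab. X n 0 = x0 n \<and> (\<forall>t\<ge>0. right_const (X n) t) \<and>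
               (\<forall>t>0. \<exists>v. has_left_val (X n) t v)) \<and>
     (\<forall>n\<in>Lab. \<forall>t>0.
        (let a = left_val (X n) t; occ = {left_val (X m) t | m. m \<in> Lab} in
          X n t = (if t \<in> R a \<and> a + 1 \<notin> occ then a + 1
                   else if t \<in> L a \<and> a - 1 \<notin> occ then a - 1 else a)))"

end

theory Submission
  imports Defs
begin


lemma has_left_val_unique:
  assumes "has_left_val f t v" "has_left_val f t w" shows "v = w"
proof -
  from assms(1) obtain e1 where e1: "e1>0" "\<forall>s\<in>{t-e1<..<t}. f s = v" unfolding has_left_val_def by blast
  from assms(2) obtain e2 where e2: "e2>0" "\<forall>s\<in>{t-e2<..<t}. f s = w" unfolding has_left_val_def by blast
  define s where "s = t - min e1 e2 / 2"
  have "s \<in> {t-e1<..<t}" "s \<in> {t-e2<..<t}" using e1 e2 by (auto simp: s_def)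
  then have "f s = v" "f s = w" using e1(2) e2(2) by blast+
  then show ?thesis by simp
qed

lemma left_val_eq: "has_left_val f t v \<Longrightarrow> left_val f t = v"
  unfolding left_val_def by (rule the_equality) (auto intro: has_left_val_unique)

lemma left_uniform:
  assumes "finite F" "\<forall>f\<in>F. \<exists>v. has_left_val f t v"
  shows "\<exists>e>0. \<forall>f\<in>F. \<forall>s\<in>{t-e<..<t}. f s = left_val f t"
  using assms
proof (induction F rule: finite_induct)
  case empty then show ?case by (intro exI[of _ 1]) auto
next
  case (insert g F)
  then obtain e where e: "e>0" "\<forall>f\<in>F. \<forall>s\<in>{t-e<..<t}. f s = left_val f t" by auto
  from insert.prems obtain v where v: "has_left_val g t v" by auto
  then obtain e2 where e2: "e2>0" "\<forall>s\<in>{t-e2<..<t}. g s = v" unfolding has_left_val_def by blast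
  have lv: "left_val g t = v" using left_val_eq[OF v] .
  have "\<forall>f\<in>insert g F. \<forall>s\<in>{t-min e e2<..<t}. f s = left_val f t"
  proof (intro ballI)
    fix f s assume f: "f \<in> insert g F" and s: "s \<in> {t-min e e2<..<t}"
    have s1: "s \<in> {t-e<..<t}" and s2: "s \<in> {t-e2<..<t}" using s by auto
    show "f s = left_val f t"
    proof (cases "f = g")
      case True then show ?thesis using e2(2) s2 lv by simp
    next
      case False then have "f \<in> F" using f by simp
      then show ?thesis using e(2) s1 by blast
    qed
  qed
  then show ?case using e e2 by (intro exI[of _ "min e e2"]) simp
qed

lemma left_point:
  assumes "finite F" "\<forall>f\<in>F. \<exists>v. has_left_val f t v" "t > 0"
  shows "\<exists>r. 0 \<le> r \<and> r < t \<and> (\<forall>f\<in>F. f r = left_val f t)"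
proof -
  obtain e where e: "e>0" "\<forall>f\<in>F. \<forall>s\<in>{t-e<..<t}. f s = left_val f t"
    using left_uniform[OF assms(1,2)] by auto
  define r where "r = max 0 (t - e/2)"
  have r: "r \<in> {t-e<..<t}" "0 \<le> r" using e assms(3) unfolding r_def greaterThanLessThan_iff by linarith+
  have "\<forall>f\<in>F. f r = left_val f t" using e(2) r(1) by blast
  moreover have "r < t" using r(1) by simp
  ultimately show ?thesis using r(2) by blast
qed

lemma right_uniform:
  assumes "finite F" "\<forall>f\<in>F. right_const f t"
  shows "\<exists>e>0. \<forall>f\<in>F. \<forall>s\<in>{t..t+e}. f s = f t"
  using assms
proof (induction F rule: finite_induct)
  case empty then show ?case by (intro exI[of _ 1]) auto
next
  case (insert g F)
  have "\<forall>f\<in>F. right_const f t" using insert.prems by simp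
  then obtain e where e: "e>0" "\<forall>f\<in>F. \<forall>s\<in>{t..t+e}. f s = f t" using insert.IH by blast
  have "right_const g t" using insert.prems by simp
  then obtain e2 where e2: "e2>0" "\<forall>s\<in>{t..t+e2}. g s = g t"
    unfolding right_const_def by blast
  have "\<forall>f\<in>insert g F. \<forall>s\<in>{t..t+min e e2}. f s = f t"
  proof (intro ballI)
    fix f s assume f: "f \<in> insert g F" and s: "s \<in> {t..t+min e e2}"
    have s1: "s \<in> {t..t+e}" and s2: "s \<in> {t..t+e2}" using s by auto
    show "f s = f t"
    proof (cases "f = g")
      case True then show ?thesis using e2(2) s2 by blast
    next
      case False then have "f \<in> F" using f by simp
      then show ?thesis using e(2) s1 by blast
    qed
  qed
  moreover have "0 < min e e2" using e(1) e2(1) by simp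
  ultimately show ?case by blast
qed

lemma time_induct:
  fixes P :: "real \<Rightarrow> bool"
  assumes P0: "P 0" and T: "0 \<le> T"
    and left: "\<And>t. 0 < t \<Longrightarrow> t \<le> T \<Longrightarrow> (\<forall>s\<in>{0..<t}. P s) \<Longrightarrow> P t"
    and right: "\<And>t. 0 \<le> t \<Longrightarrow> t < T \<Longrightarrow> (\<forall>s\<in>{0..t}. P s) \<Longrightarrow> \<exists>e>0. \<forall>s\<in>{t..t+e}. P s"
  shows "\<forall>s\<in>{0..T}. P s"
proof (rule ccontr)
  assume nt: "\<not> (\<forall>s\<in>{0..T}. P s)"
  define B where "B = {s\<in>{0..T}. \<not> P s}"
  have Bne: "B \<noteq> {}" using nt by (auto simp: B_def)
  have Bbdd: "bdd_below B" by (auto simp: B_def bdd_below_def)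
  define u where "u = Inf B"
  have lowb: "\<And>b. b \<in> B \<Longrightarrow> u \<le> b" unfolding u_def using Bbdd by (rule cInf_lower[rotated])
  have u0: "0 \<le> u" unfolding u_def by (rule cInf_greatest[OF Bne]) (auto simp: B_def)
  obtain b0 where b0: "b0 \<in> B" using Bne by auto
  have uT: "u \<le> T" using lowb[OF b0] b0 by (auto simp: B_def)
  have below: "\<forall>s\<in>{0..<u}. P s"
  proof
    fix s assume s: "s \<in> {0..<u}"
    show "P s"
    proof (rule ccontr)
      assume "\<not> P s"
      then have "s \<in> B" using s uT by (auto simp: B_def)
      then show False using lowb s by force
    qed
  qed
  have Pu: "P u"
  proof (cases "u = 0")
    case True then show ?thesis using P0 by simp
  next
    case False then show ?thesis using left[of u] u0 uT below by auto
  qed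
  have upto: "\<forall>s\<in>{0..u}. P s" using below Pu by (auto simp: less_eq_real_def)
  have uT2: "u < T"
  proof (rule ccontr)
    assume "\<not> u < T"
    then have "u = T" using uT by simp
    then have "b0 = u" using b0 lowb[OF b0] by (auto simp: B_def)
    then show False using b0 Pu by (auto simp: B_def)
  qed
  obtain e where e: "e > 0" "\<forall>s\<in>{u..u+e}. P s" using right[OF u0 uT2 upto] by auto
  have "Inf B < u + e" using e unfolding u_def by simp
  then obtain b where b: "b \<in> B" "b < u + e" using cInf_less_iff[OF Bne Bbdd] by auto
  then show False using lowb[OF b(1)] e(2) by (auto simp: B_def)
qed

lemma asep_basic:
  assumes "asep_traj R L Lab x0 X" "n \<in> Lab"
  shows "X n 0 = x0 n" "\<And>t. t \<ge> 0 \<Longrightarrow> right_const (X n) t"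
    "\<And>t. t > 0 \<Longrightarrow> \<exists>v. has_left_val (X n) t v"
  using assms unfolding asep_traj_def by auto

lemma asep_step:
  assumes "asep_traj R L Lab x0 X" "n \<in> Lab" "t > 0"
  shows "(X n t = left_val (X n) t + 1 \<and> t \<in> R (left_val (X n) t) \<and>
           \<not> (\<exists>m\<in>Lab. left_val (X m) t = left_val (X n) t + 1)) \<or>
         (X n t = left_val (X n) t - 1 \<and> t \<in> L (left_val (X n) t) \<and>
           \<not> (\<exists>m\<in>Lab. left_val (X m) t = left_val (X n) t - 1) \<and>
           \<not> (t \<in> R (left_val (X n) t) \<and> \<not> (\<exists>m\<in>Lab. left_val (X m) t = left_val (X n) t + 1))) \<or>
         (X n t = left_val (X n) t \<and>
           \<not> (t \<in> R (left_val (X n) t) \<and> \<not> (\<exists>m\<in>Lab. left_val (X m) t = left_val (X n) t + 1)) \<and>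
           \<not> (t \<in> L (left_val (X n) t) \<and> \<not> (\<exists>m\<in>Lab. left_val (X m) t = left_val (X n) t - 1)))"
proof -
  have h: "\<forall>n\<in>Lab. \<forall>t>0. (let a = left_val (X n) t; occ = {left_val (X m) t | m. m \<in> Lab} in
          X n t = (if t \<in> R a \<and> a + 1 \<notin> occ then a + 1
                   else if t \<in> L a \<and> a - 1 \<notin> occ then a - 1 else a))"
    using assms(1) unfolding asep_traj_def by (rule conjunct2)
  have e: "X n t = (let a = left_val (X n) t; occ = {left_val (X m) t | m. m \<in> Lab} in
          (if t \<in> R a \<and> a + 1 \<notin> occ then a + 1
                   else if t \<in> L a \<and> a - 1 \<notin> occ then a - 1 else a))"
    using h[rule_format, OF assms(2,3)] unfolding Let_def by simp
  have occ: "\<And>z. (z \<in> {left_val (X m) t | m. m \<in> Lab}) = (\<exists>m\<in>Lab. left_val (X m) t = z)" by auto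
  have if3: "\<And>x a P Q. x = (if P then a+1 else if Q then a-1 else (a::int)) \<Longrightarrow>
     (x = a+1 \<and> P) \<or> (x = a-1 \<and> Q \<and> \<not>P) \<or> (x = a \<and> \<not>P \<and> \<not>Q)" by auto
  show ?thesis using if3[OF e[unfolded Let_def occ]] by blast
qed



lemma clocks_disj: "clocks_ok R L \<Longrightarrow> t \<in> R i \<Longrightarrow> t \<notin> L j"
  unfolding clocks_ok_def by blast

lemma order_adj:
  assumes ok: "clocks_ok R L" and X: "asep_traj R L Lab x0 X"
    and n: "n \<in> Lab" "n+1 \<in> Lab" and init: "x0 (n+1) < x0 n" and s: "s \<ge> 0"
  shows "X (n+1) s < X n s"
proof -
  let ?P = "\<lambda>s. X (n+1) s < X n s"
  have "\<forall>r\<in>{0..s}. ?P r"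
  proof (rule time_induct)
    show "?P 0" using asep_basic(1)[OF X n(1)] asep_basic(1)[OF X n(2)] init by simp
    show "0 \<le> s" by fact
  next
    fix t assume t: "0 < t" "t \<le> s" and IH: "\<forall>r\<in>{0..<t}. ?P r"
    have hl: "\<forall>f\<in>{X n, X (n+1)}. \<exists>v. has_left_val f t v"
      using asep_basic(3)[OF X n(1) t(1)] asep_basic(3)[OF X n(2) t(1)] by blast
    obtain r where r: "0 \<le> r" "r < t" "\<forall>f\<in>{X n, X (n+1)}. f r = left_val f t"
      using left_point[OF _ hl t(1)] by auto
    have rn: "X n r = left_val (X n) t" and rn1: "X (n+1) r = left_val (X (n+1)) t" using r(3) by auto
    have lt: "left_val (X (n+1)) t < left_val (X n) t" using IH r(1,2) rn rn1 by force
    have o1: "\<exists>m\<in>Lab. left_val (X m) t = left_val (X n) t" using n(1) by blast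
    have o2: "\<exists>m\<in>Lab. left_val (X m) t = left_val (X (n+1)) t" using n(2) by blast
    note sn = asep_step[OF X n(1) t(1)] and sn1 = asep_step[OF X n(2) t(1)]
    have d: "t \<in> R (left_val (X (n+1)) t) \<Longrightarrow> t \<notin> L (left_val (X n) t)" using clocks_disj[OF ok] by blast
    show "?P t"
    proof (cases "left_val (X n) t = left_val (X (n+1)) t + 1")
      case True
      then show ?thesis using sn sn1 o1 o2 by auto
    next
      case False
      then show ?thesis using sn sn1 lt d by auto
    qed
  next
    fix t assume t: "0 \<le> t" "t < s" and IH: "\<forall>r\<in>{0..t}. ?P r"
    have hr: "\<forall>f\<in>{X n, X (n+1)}. right_const f t"
      using asep_basic(2)[OF X n(1) t(1)] asep_basic(2)[OF X n(2) t(1)] by blast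
    obtain e where e: "e>0" "\<forall>f\<in>{X n, X (n+1)}. \<forall>r\<in>{t..t+e}. f r = f t"
      using right_uniform[OF _ hr] by auto
    have "\<forall>r\<in>{t..t+e}. ?P r"
    proof
      fix r assume "r \<in> {t..t+e}"
      then have "X n r = X n t" "X (n+1) r = X (n+1) t" using e(2) by blast+
      then show "?P r" using IH t by auto
    qed
    then show "\<exists>e>0. \<forall>r\<in>{t..t+e}. ?P r" using e(1) by blast
  qed
  then show ?thesis using s by auto
qed

lemma order_chain:
  assumes ok: "clocks_ok R L" and X: "asep_traj R L {n. c \<le> n} x0 X"
    and init: "\<forall>n\<ge>c. x0 (n+1) < x0 n" and s: "0 \<le> s" and m: "c \<le> m" "m \<le> n"
  shows "X n s + (n - m) \<le> X m s"
proof (rule int_ge_induct[of m n "\<lambda>k. X k s + (k - m) \<le> X m s"])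
  show "m \<le> n" by fact
  show "X m s + (m - m) \<le> X m s" by simp
next
  fix k assume k: "m \<le> k" and IH: "X k s + (k - m) \<le> X m s"
  have "X (k+1) s < X k s" using order_adj[OF ok X, of k] m k init s by auto
  then show "X (k + 1) s + (k + 1 - m) \<le> X m s" using IH by simp
qed

lemma left_chain:
  assumes ok: "clocks_ok R L" and X: "asep_traj R L {n. c \<le> n} x0 X"
    and init: "\<forall>n\<ge>c. x0 (n+1) < x0 n" and t: "0 < t" and m: "c \<le> m" "m \<le> n"
  shows "left_val (X n) t + (n - m) \<le> left_val (X m) t"
proof -
  have hl: "\<forall>f\<in>{X m, X n}. \<exists>v. has_left_val f t v"
    using asep_basic(3)[OF X _ t] m by auto
  obtain r where r: "0 \<le> r" "r < t" "\<forall>f\<in>{X m, X n}. f r = left_val f t"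
    using left_point[OF _ hl t] by auto
  have "X m r = left_val (X m) t" "X n r = left_val (X n) t" using r(3) by auto
  then show ?thesis using order_chain[OF ok X init r(1) m] by simp
qed

lemma occ_up:
  assumes ok: "clocks_ok R L" and X: "asep_traj R L {n. c \<le> n} x0 X"
    and init: "\<forall>n\<ge>c. x0 (n+1) < x0 n" and t: "0 < t" and n: "c \<le> n"
    and o: "\<exists>m\<in>{n. c \<le> n}. left_val (X m) t = left_val (X n) t + 1"
  shows "c \<le> n - 1 \<and> left_val (X (n-1)) t = left_val (X n) t + 1"
proof -
  obtain m where m: "c \<le> m" "left_val (X m) t = left_val (X n) t + 1" using o by auto
  have "m < n"
  proof (rule ccontr)
    assume "\<not> m < n"
    then show False using left_chain[OF ok X init t n, of m] m by simp
  qed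
  then have a: "c \<le> n - 1" "m \<le> n - 1" using m by auto
  have "left_val (X (n-1)) t + (n - 1 - m) \<le> left_val (X m) t" using left_chain[OF ok X init t m(1) a(2)] .
  moreover have "left_val (X n) t + (n - (n-1)) \<le> left_val (X (n-1)) t" using left_chain[OF ok X init t a(1), of n] by simp
  ultimately have "m = n - 1" using m a by simp
  then show ?thesis using m a by simp
qed

lemma occ_down:
  assumes ok: "clocks_ok R L" and X: "asep_traj R L {n. c \<le> n} x0 X"
    and init: "\<forall>n\<ge>c. x0 (n+1) < x0 n" and t: "0 < t" and n: "c \<le> n"
    and o: "\<exists>m\<in>{n. c \<le> n}. left_val (X m) t = left_val (X n) t - 1"
  shows "left_val (X (n+1)) t = left_val (X n) t - 1"
proof -
  obtain m where m: "c \<le> m" "left_val (X m) t = left_val (X n) t - 1" using o by auto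
  have "n < m"
  proof (rule ccontr)
    assume "\<not> n < m"
    then show False using left_chain[OF ok X init t m(1), of n] m by simp
  qed
  then have a: "n + 1 \<le> m" by simp
  have "left_val (X m) t + (m - (n+1)) \<le> left_val (X (n+1)) t" using left_chain[OF ok X init t _ a] n by simp
  moreover have "left_val (X (n+1)) t + ((n+1) - n) \<le> left_val (X n) t" using left_chain[OF ok X init t n, of "n+1"] by simp
  ultimately have "m = n + 1" using m a by simp
  then show ?thesis using m by simp
qed

lemma confine:
  assumes X: "asep_traj R L Lab x0 X" and n: "n \<in> Lab" and T: "0 \<le> T"
    and b: "(R i \<union> L (i+1)) \<inter> {0..T} = {}"
  shows "x0 n \<le> i \<Longrightarrow> \<forall>s\<in>{0..T}. X n s \<le> i" and "i < x0 n \<Longrightarrow> \<forall>s\<in>{0..T}. i < X n s"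
proof -
  have right: "\<And>P t. 0 \<le> t \<Longrightarrow> P (X n t) \<Longrightarrow> \<exists>e>0. \<forall>s\<in>{t..t+e}. P (X n s)"
  proof -
    fix P t assume "0 \<le> t" "P (X n t)"
    then obtain e where e: "e>0" "\<forall>s\<in>{t..t+e}. X n s = X n t"
      using asep_basic(2)[OF X n] unfolding right_const_def by blast
    then show "\<exists>e>0. \<forall>s\<in>{t..t+e}. P (X n s)" using \<open>P (X n t)\<close> by metis
  qed
  show "x0 n \<le> i \<Longrightarrow> \<forall>s\<in>{0..T}. X n s \<le> i"
  proof (rule time_induct)
    assume "x0 n \<le> i" then show "X n 0 \<le> i" using asep_basic(1)[OF X n] by simp
    show "0 \<le> T" by fact
  next
    fix t assume t: "0 < t" "t \<le> T" and IH: "\<forall>s\<in>{0..<t}. X n s \<le> i"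
    obtain v where v: "has_left_val (X n) t v" using asep_basic(3)[OF X n t(1)] by blast
    then obtain e where e: "e > 0" "\<forall>s\<in>{t-e<..<t}. X n s = v" unfolding has_left_val_def by blast
    define r where "r = max 0 (t - e/2)"
    have r: "r \<in> {t-e<..<t}" "0 \<le> r" using e t unfolding r_def by auto
    have "v \<le> i" using IH r e(2) by force
    moreover have lv: "left_val (X n) t = v" using left_val_eq[OF v] .
    moreover have "t \<notin> R i" using b t by auto
    moreover have "X n t \<le> v + 1" "X n t = v + 1 \<Longrightarrow> t \<in> R v" using asep_step[OF X n t(1)] lv by auto
    ultimately show "X n t \<le> i" by (cases "v = i"; cases "X n t = v + 1") auto
  next
    fix t assume "0 \<le> t" "t < T" "\<forall>s\<in>{0..t}. X n s \<le> i"
    then show "\<exists>e>0. \<forall>s\<in>{t..t+e}. X n s \<le> i" using right[where P="\<lambda>v. v \<le> i" and t=t] by auto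
  qed
  show "i < x0 n \<Longrightarrow> \<forall>s\<in>{0..T}. i < X n s"
  proof (rule time_induct)
    assume "i < x0 n" then show "i < X n 0" using asep_basic(1)[OF X n] by simp
    show "0 \<le> T" by fact
  next
    fix t assume t: "0 < t" "t \<le> T" and IH: "\<forall>s\<in>{0..<t}. i < X n s"
    obtain v where v: "has_left_val (X n) t v" using asep_basic(3)[OF X n t(1)] by blast
    then obtain e where e: "e > 0" "\<forall>s\<in>{t-e<..<t}. X n s = v" unfolding has_left_val_def by blast
    define r where "r = max 0 (t - e/2)"
    have r: "r \<in> {t-e<..<t}" "0 \<le> r" using e t unfolding r_def by auto
    have "i < v" using IH r e(2) by force
    moreover have lv: "left_val (X n) t = v" using left_val_eq[OF v] .
    moreover have "t \<notin> L (i+1)" using b t by auto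
    moreover have "v - 1 \<le> X n t" "X n t = v - 1 \<Longrightarrow> t \<in> L v" using asep_step[OF X n t(1)] lv by auto
    ultimately show "i < X n t" by (cases "v = i + 1"; cases "X n t = v - 1") auto
  next
    fix t assume "0 \<le> t" "t < T" "\<forall>s\<in>{0..t}. i < X n s"
    then show "\<exists>e>0. \<forall>s\<in>{t..t+e}. i < X n s" using right[where P="\<lambda>v. i < v" and t=t] by auto
  qed
qed



lemma local_cmp:
  fixes a b xn yn :: int and t :: real
  assumes sx: "(xn = a + 1 \<and> t \<in> R a \<and> \<not> ox1) \<or> (xn = a - 1 \<and> t \<in> L a \<and> \<not> oxm \<and> \<not>(t \<in> R a \<and> \<not> ox1)) \<or> (xn = a \<and> \<not>(t \<in> R a \<and> \<not> ox1) \<and> \<not>(t \<in> L a \<and> \<not> oxm))"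
    and sy: "(yn = b + 1 \<and> t \<in> R b \<and> \<not> oy1) \<or> (yn = b - 1 \<and> t \<in> L b \<and> \<not> oym \<and> \<not>(t \<in> R b \<and> \<not> oy1)) \<or> (yn = b \<and> \<not>(t \<in> R b \<and> \<not> oy1) \<and> \<not>(t \<in> L b \<and> \<not> oym))"
    and ab: "a \<le> b" and disj: "\<And>i j. t \<in> R i \<Longrightarrow> t \<notin> L j"
    and h1: "a = b \<Longrightarrow> oy1 \<Longrightarrow> ox1"
    and h2: "a = b \<Longrightarrow> t \<in> L a \<Longrightarrow> oxm \<Longrightarrow> oym"
  shows "xn \<le> yn"
proof (cases "a = b")
  case True
  then show ?thesis using sx sy h1 h2 by auto
next
  case False
  show ?thesis
  proof (cases "a = b - 1")
    case True then show ?thesis using sx sy disj[of a b] by auto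
  next
    case False then show ?thesis using sx sy ab \<open>a \<noteq> b\<close> by auto
  qed
qed

lemma compare:
  assumes ok: "clocks_ok R L"
    and X: "asep_traj R L {n. c \<le> n} x0 X" and Y: "asep_traj R L {n. c' \<le> n} y0 Y"
    and ordX: "\<forall>n\<ge>c. x0 (n+1) < x0 n" and ordY: "\<forall>n\<ge>c'. y0 (n+1) < y0 n"
    and cc: "c \<le> c'" and cn: "c' \<le> nh"
    and init: "\<forall>n\<in>{c'..nh}. x0 n \<le> y0 n"
    and T: "0 \<le> T"
    and bond: "L (i+1) \<inter> {0..T} = {}"
    and bX: "\<forall>s\<in>{0..T}. X (nh+1) s \<le> i \<and> i < X nh s"
  shows "\<forall>s\<in>{0..T}. \<forall>n\<in>{c'..nh}. X n s \<le> Y n s"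
proof (rule time_induct)
  show "\<forall>n\<in>{c'..nh}. X n 0 \<le> Y n 0" using init asep_basic(1)[OF X] asep_basic(1)[OF Y] cc by auto
  show "0 \<le> T" by fact
next
  fix t assume t: "0 < t" "t \<le> T" and IH: "\<forall>s\<in>{0..<t}. \<forall>n\<in>{c'..nh}. X n s \<le> Y n s"
  let ?F = "X ` {c'..nh+1} \<union> Y ` {c'..nh+1}"
  have hl: "\<forall>f\<in>?F. \<exists>v. has_left_val f t v"
    using asep_basic(3)[OF X _ t(1)] asep_basic(3)[OF Y _ t(1)] cc by auto
  obtain r where r: "0 \<le> r" "r < t" "\<forall>f\<in>?F. f r = left_val f t"
    using left_point[OF _ hl t(1)] by auto
  have rX: "\<And>n. n \<in> {c'..nh+1} \<Longrightarrow> X n r = left_val (X n) t" using r(3) by blast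
  have rY: "\<And>n. n \<in> {c'..nh+1} \<Longrightarrow> Y n r = left_val (Y n) t" using r(3) by blast
  have lvrel: "left_val (X n) t \<le> left_val (Y n) t" if n: "n \<in> {c'..nh}" for n
  proof -
    have "X n r \<le> Y n r" using IH r(1,2) n by auto
    moreover have "n \<in> {c'..nh+1}" using n by auto
    ultimately show ?thesis using rX rY by simp
  qed
  have bnd: "left_val (X (nh+1)) t \<le> i" "i < left_val (X nh) t"
  proof -
    have "X (nh+1) r \<le> i \<and> i < X nh r" using bX r(1,2) t(2) by auto
    moreover have "nh + 1 \<in> {c'..nh+1}" "nh \<in> {c'..nh+1}" using cn by auto
    ultimately show "left_val (X (nh+1)) t \<le> i" "i < left_val (X nh) t" using rX by auto
  qed
  have disj: "\<And>i j. t \<in> R i \<Longrightarrow> t \<notin> L j" using clocks_disj[OF ok] by blast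
  show "\<forall>n\<in>{c'..nh}. X n t \<le> Y n t"
  proof
    fix n assume n: "n \<in> {c'..nh}"
    have nX: "n \<in> {n. c \<le> n}" and nY: "n \<in> {n. c' \<le> n}" using n cc by auto
    show "X n t \<le> Y n t"
    proof (rule local_cmp[OF asep_step[OF X nX t(1)] asep_step[OF Y nY t(1)]])
      show "left_val (X n) t \<le> left_val (Y n) t" using lvrel[OF n] .
      show "\<And>i j. t \<in> R i \<Longrightarrow> t \<notin> L j" by (rule disj)
    next
      assume ab: "left_val (X n) t = left_val (Y n) t"
        and o: "\<exists>m\<in>{n. c' \<le> n}. left_val (Y m) t = left_val (Y n) t + 1"
      have o2: "c' \<le> n - 1 \<and> left_val (Y (n-1)) t = left_val (Y n) t + 1"
        using occ_up[OF ok Y ordY t(1) _ o] nY by auto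
      then have "n - 1 \<in> {c'..nh}" using n by auto
      then have "left_val (X (n-1)) t \<le> left_val (Y (n-1)) t" using lvrel by blast
      moreover have "left_val (X n) t + (n - (n-1)) \<le> left_val (X (n-1)) t"
        using left_chain[OF ok X ordX t(1), of "n-1" n] o2 cc by auto
      ultimately have "left_val (X (n-1)) t = left_val (X n) t + 1" using ab o2 by simp
      then show "\<exists>m\<in>{n. c \<le> n}. left_val (X m) t = left_val (X n) t + 1" using o2 cc
        by (intro bexI[of _ "n-1"]) auto
    next
      assume ab: "left_val (X n) t = left_val (Y n) t" and tL: "t \<in> L (left_val (X n) t)"
        and o: "\<exists>m\<in>{n. c \<le> n}. left_val (X m) t = left_val (X n) t - 1"
      have o2: "left_val (X (n+1)) t = left_val (X n) t - 1"
        using occ_down[OF ok X ordX t(1) _ o] nX by auto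
      show "\<exists>m\<in>{n. c' \<le> n}. left_val (Y m) t = left_val (Y n) t - 1"
      proof (cases "n = nh")
        case True
        then have "left_val (X n) t = i + 1" using bnd o2 by simp
        then have "t \<in> L (i+1) \<inter> {0..T}" using tL t by auto
        then show ?thesis using bond by blast
      next
        case False
        then have "n + 1 \<in> {c'..nh}" using n by auto
        then have "left_val (X (n+1)) t \<le> left_val (Y (n+1)) t" using lvrel by blast
        moreover have "left_val (Y (n+1)) t + ((n+1) - n) \<le> left_val (Y n) t"
          using left_chain[OF ok Y ordY t(1), of n "n+1"] nY by auto
        ultimately have "left_val (Y (n+1)) t = left_val (Y n) t - 1" using ab o2 by simp
        then show ?thesis using nY by (intro bexI[of _ "n+1"]) auto
      qed
    qed
  qed
next
  fix t assume t: "0 \<le> t" "t < T" and IH: "\<forall>s\<in>{0..t}. \<forall>n\<in>{c'..nh}. X n s \<le> Y n s"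
  let ?F = "X ` {c'..nh} \<union> Y ` {c'..nh}"
  have hr: "\<forall>f\<in>?F. right_const f t"
    using asep_basic(2)[OF X _ t(1)] asep_basic(2)[OF Y _ t(1)] cc by auto
  obtain e where e: "e>0" "\<forall>f\<in>?F. \<forall>r\<in>{t..t+e}. f r = f t"
    using right_uniform[OF _ hr] by auto
  have "\<forall>r\<in>{t..t+e}. \<forall>n\<in>{c'..nh}. X n r \<le> Y n r"
  proof (intro ballI)
    fix r n assume r: "r \<in> {t..t+e}" and n: "n \<in> {c'..nh}"
    have "X n r = X n t" "Y n r = Y n t" using e(2) r n by blast+
    moreover have "X n t \<le> Y n t" using IH t n by auto
    ultimately show "X n r \<le> Y n r" by simp
  qed
  then show "\<exists>e>0. \<forall>r\<in>{t..t+e}. \<forall>n\<in>{c'..nh}. X n r \<le> Y n r" using e(1) by blast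
qed



lemma local_tasep:
  fixes a al be xm xa xb :: int
  assumes sx: "(xm = a+1 \<and> t\<in>R a \<and> \<not>ox) \<or> (xm = a \<and> \<not>(t\<in>R a \<and> \<not>ox))"
    and sa: "(xa = al+1 \<and> t\<in>R al \<and> \<not>oa) \<or> (xa = al \<and> \<not>(t\<in>R al \<and> \<not>oa))"
    and sb: "(xb = be+1 \<and> t\<in>R be \<and> \<not>ob) \<or> (xb = be \<and> \<not>(t\<in>R be \<and> \<not>ob))"
    and a: "a = min al be"
    and key: "t \<in> R a \<Longrightarrow> ox \<Longrightarrow> (al = a \<and> oa) \<or> (be = a \<and> ob)"
  shows "min xa xb \<le> xm"
proof (cases "xm = a + 1")
  case True
  then show ?thesis using sa sb a by auto
next
  case False
  then have xm: "xm = a" "\<not>(t\<in>R a \<and> \<not>ox)" using sx by auto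
  show ?thesis
  proof (cases "t \<in> R a")
    case True
    then have "ox" using xm by auto
    then have "(al = a \<and> oa) \<or> (be = a \<and> ob)" using key True by auto
    then show ?thesis using sa sb xm by auto
  next
    case False
    then show ?thesis using sa sb xm a by (cases "al \<le> be") auto
  qed
qed

lemma tasep_step:
  assumes X: "asep_traj R L Lab x0 X" and n: "n \<in> Lab" and t: "t > 0" and Le: "\<forall>i. L i = {}"
  shows "(X n t = left_val (X n) t + 1 \<and> t \<in> R (left_val (X n) t) \<and>
           \<not> (\<exists>m\<in>Lab. left_val (X m) t = left_val (X n) t + 1)) \<or>
         (X n t = left_val (X n) t \<and>
           \<not> (t \<in> R (left_val (X n) t) \<and> \<not> (\<exists>m\<in>Lab. left_val (X m) t = left_val (X n) t + 1)))"
  using asep_step[OF X n t] Le by auto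

lemma tasep_part:
  assumes ok: "clocks_ok R L" and Le: "\<forall>i. L i = {}"
    and X: "asep_traj R L {n. -N \<le> n} x0 X" and A: "asep_traj R L {n. 1 \<le> n} a0 XA"
    and B: "asep_traj R L {n. -N \<le> n} b0 XB"
    and ordX: "\<forall>n\<ge>-N. x0 (n+1) < x0 n" and ordA: "\<forall>n\<ge>1. a0 (n+1) < a0 n"
    and ordB: "\<forall>n\<ge>-N. b0 (n+1) < b0 n"
    and N0: "0 \<le> N"
    and initB: "\<forall>m\<in>{-N..0}. x0 m = b0 m"
    and initM: "\<forall>m\<ge>1. min (a0 m) (b0 m) \<le> x0 m"
    and leA: "\<forall>m\<ge>1. \<forall>s\<ge>0. X m s \<le> XA m s" and leB: "\<forall>m\<ge>1. \<forall>s\<ge>0. X m s \<le> XB m s"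
    and T: "0 \<le> T"
  shows "\<forall>s\<in>{0..T}. \<forall>m\<in>{-N..nn}. (m \<le> 0 \<longrightarrow> X m s = XB m s) \<and> (1 \<le> m \<longrightarrow> min (XA m s) (XB m s) \<le> X m s)"
proof (rule time_induct)
  show "\<forall>m\<in>{-N..nn}. (m \<le> 0 \<longrightarrow> X m 0 = XB m 0) \<and> (1 \<le> m \<longrightarrow> min (XA m 0) (XB m 0) \<le> X m 0)"
  proof (intro ballI conjI impI)
    fix m assume "m \<in> {-N..nn}" "m \<le> 0"
    then show "X m 0 = XB m 0" using initB asep_basic(1)[OF X] asep_basic(1)[OF B] by auto
  next
    fix m assume "m \<in> {-N..nn}" "1 \<le> m"
    then show "min (XA m 0) (XB m 0) \<le> X m 0"
      using initM asep_basic(1)[OF X] asep_basic(1)[OF B] asep_basic(1)[OF A] N0 by auto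
  qed
  show "0 \<le> T" by fact
next
  fix t assume t: "0 < t" "t \<le> T"
    and IH: "\<forall>s\<in>{0..<t}. \<forall>m\<in>{-N..nn}. (m \<le> 0 \<longrightarrow> X m s = XB m s) \<and> (1 \<le> m \<longrightarrow> min (XA m s) (XB m s) \<le> X m s)"
  let ?F = "X ` {-N..nn} \<union> XB ` {-N..nn} \<union> XA ` {1..nn}"
  have hl: "\<forall>f\<in>?F. \<exists>v. has_left_val f t v"
    using asep_basic(3)[OF X _ t(1)] asep_basic(3)[OF B _ t(1)] asep_basic(3)[OF A _ t(1)] by auto
  obtain r where r: "0 \<le> r" "r < t" "\<forall>f\<in>?F. f r = left_val f t"
    using left_point[OF _ hl t(1)] by auto
  have rX: "\<And>n. n \<in> {-N..nn} \<Longrightarrow> X n r = left_val (X n) t" using r(3) by blast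
  have rB: "\<And>n. n \<in> {-N..nn} \<Longrightarrow> XB n r = left_val (XB n) t" using r(3) by blast
  have rA: "\<And>n. n \<in> {1..nn} \<Longrightarrow> XA n r = left_val (XA n) t" using r(3) by blast
  have lvB: "left_val (X m) t = left_val (XB m) t" if "m \<in> {-N..nn}" "m \<le> 0" for m
  proof -
    have "X m r = XB m r" using IH r(1,2) that by auto
    then show ?thesis using rX rB that by simp
  qed
  have lvM: "min (left_val (XA m) t) (left_val (XB m) t) \<le> left_val (X m) t"
    and lvA: "left_val (X m) t \<le> left_val (XA m) t" and lvBB: "left_val (X m) t \<le> left_val (XB m) t"
    if m: "m \<in> {1..nn}" for m
  proof -
    have m2: "m \<in> {-N..nn}" using m N0 by auto
    have "min (XA m r) (XB m r) \<le> X m r" using IH r(1,2) m2 m by auto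
    moreover have "X m r \<le> XA m r" "X m r \<le> XB m r" using leA leB r(1) m by auto
    ultimately show "min (left_val (XA m) t) (left_val (XB m) t) \<le> left_val (X m) t"
      "left_val (X m) t \<le> left_val (XA m) t" "left_val (X m) t \<le> left_val (XB m) t"
      using rX[OF m2] rB[OF m2] rA[OF m] by auto
  qed
  show "\<forall>m\<in>{-N..nn}. (m \<le> 0 \<longrightarrow> X m t = XB m t) \<and> (1 \<le> m \<longrightarrow> min (XA m t) (XB m t) \<le> X m t)"
  proof (intro ballI conjI impI)
    fix m assume m: "m \<in> {-N..nn}" "m \<le> 0"
    have mX: "m \<in> {n. -N \<le> n}" using m by auto
    have a: "left_val (X m) t = left_val (XB m) t" using lvB m by blast
    have oeq: "(\<exists>k\<in>{n. -N \<le> n}. left_val (X k) t = left_val (X m) t + 1) \<longleftrightarrow>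
               (\<exists>k\<in>{n. -N \<le> n}. left_val (XB k) t = left_val (XB m) t + 1)"
    proof
      assume o: "\<exists>k\<in>{n. -N \<le> n}. left_val (X k) t = left_val (X m) t + 1"
      have o2: "-N \<le> m - 1 \<and> left_val (X (m-1)) t = left_val (X m) t + 1"
        using occ_up[OF ok X ordX t(1) _ o] m by auto
      then have "left_val (XB (m-1)) t = left_val (XB m) t + 1" using lvB[of "m-1"] m a by auto
      then show "\<exists>k\<in>{n. -N \<le> n}. left_val (XB k) t = left_val (XB m) t + 1" using o2
        by (intro bexI[of _ "m-1"]) auto
    next
      assume o: "\<exists>k\<in>{n. -N \<le> n}. left_val (XB k) t = left_val (XB m) t + 1"
      have o2: "-N \<le> m - 1 \<and> left_val (XB (m-1)) t = left_val (XB m) t + 1"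
        using occ_up[OF ok B ordB t(1) _ o] m by auto
      then have "left_val (X (m-1)) t = left_val (X m) t + 1" using lvB[of "m-1"] m a by auto
      then show "\<exists>k\<in>{n. -N \<le> n}. left_val (X k) t = left_val (X m) t + 1" using o2
        by (intro bexI[of _ "m-1"]) auto
    qed
    show "X m t = XB m t"
      using tasep_step[OF X mX t(1) Le] tasep_step[OF B mX t(1) Le] a oeq by auto
  next
    fix m assume m: "m \<in> {-N..nn}" "1 \<le> m"
    have mX: "m \<in> {n. -N \<le> n}" and mA: "m \<in> {n. 1 \<le> n}" and m1: "m \<in> {1..nn}" using m by auto
    show "min (XA m t) (XB m t) \<le> X m t"
    proof (rule local_tasep[OF tasep_step[OF X mX t(1) Le] tasep_step[OF A mA t(1) Le] tasep_step[OF B mX t(1) Le]])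
      show "left_val (X m) t = min (left_val (XA m) t) (left_val (XB m) t)"
        using lvM[OF m1] lvA[OF m1] lvBB[OF m1] by linarith
    next
      assume o: "\<exists>k\<in>{n. -N \<le> n}. left_val (X k) t = left_val (X m) t + 1"
      have o2: "left_val (X (m-1)) t = left_val (X m) t + 1"
        using occ_up[OF ok X ordX t(1) _ o] mX by auto
      show "left_val (XA m) t = left_val (X m) t \<and> (\<exists>k\<in>{n. 1 \<le> n}. left_val (XA k) t = left_val (XA m) t + 1) \<or>
            left_val (XB m) t = left_val (X m) t \<and> (\<exists>k\<in>{n. -N \<le> n}. left_val (XB k) t = left_val (XB m) t + 1)"
      proof (cases "m = 1")
        case True
        have "left_val (XB 0) t = left_val (X 1) t + 1" using lvB[of 0] o2 True N0 m by auto
        moreover have "left_val (XB 1) t + (1 - 0) \<le> left_val (XB 0) t"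
          using left_chain[OF ok B ordB t(1), of 0 1] N0 by auto
        moreover have "left_val (X 1) t \<le> left_val (XB 1) t" using lvBB[of 1] m True by auto
        ultimately have "left_val (XB 1) t = left_val (X 1) t"
          "left_val (XB 0) t = left_val (XB 1) t + 1" by auto
        then show ?thesis using True N0 by (intro disjI2 conjI bexI[of _ 0]) auto
      next
        case False
        then have m1': "m - 1 \<in> {1..nn}" using m by auto
        have c1: "min (left_val (XA (m-1)) t) (left_val (XB (m-1)) t) \<le> left_val (X m) t + 1"
          using lvM[OF m1'] o2 by simp
        have c2: "left_val (XA m) t + (m - (m-1)) \<le> left_val (XA (m-1)) t"
          using left_chain[OF ok A ordA t(1), of "m-1" m] m1' by auto
        have c3: "left_val (XB m) t + (m - (m-1)) \<le> left_val (XB (m-1)) t"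
          using left_chain[OF ok B ordB t(1), of "m-1" m] m1' N0 by auto
        have c4: "left_val (X m) t \<le> left_val (XA m) t" "left_val (X m) t \<le> left_val (XB m) t"
          using lvA[OF m1] lvBB[OF m1] by auto
        show ?thesis
        proof (cases "left_val (XA (m-1)) t \<le> left_val (X m) t + 1")
          case True
          then have "left_val (XA m) t = left_val (X m) t" "left_val (XA (m-1)) t = left_val (XA m) t + 1"
            using c2 c4 by auto
          then show ?thesis using m1' by (intro disjI1 conjI bexI[of _ "m-1"]) auto
        next
          case False
          then have "left_val (XB (m-1)) t \<le> left_val (X m) t + 1" using c1 by linarith
          then have "left_val (XB m) t = left_val (X m) t" "left_val (XB (m-1)) t = left_val (XB m) t + 1"
            using c3 c4 by auto
          then show ?thesis using m1' N0 by (intro disjI2 conjI bexI[of _ "m-1"]) auto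
        qed
      qed
    qed
  qed
next
  fix t assume t: "0 \<le> t" "t < T"
    and IH: "\<forall>s\<in>{0..t}. \<forall>m\<in>{-N..nn}. (m \<le> 0 \<longrightarrow> X m s = XB m s) \<and> (1 \<le> m \<longrightarrow> min (XA m s) (XB m s) \<le> X m s)"
  let ?F = "X ` {-N..nn} \<union> XB ` {-N..nn} \<union> XA ` {1..nn}"
  have hr: "\<forall>f\<in>?F. right_const f t"
    using asep_basic(2)[OF X _ t(1)] asep_basic(2)[OF B _ t(1)] asep_basic(2)[OF A _ t(1)] by auto
  obtain e where e: "e>0" "\<forall>f\<in>?F. \<forall>r\<in>{t..t+e}. f r = f t"
    using right_uniform[OF _ hr] by auto
  have "\<forall>r\<in>{t..t+e}. \<forall>m\<in>{-N..nn}. (m \<le> 0 \<longrightarrow> X m r = XB m r) \<and> (1 \<le> m \<longrightarrow> min (XA m r) (XB m r) \<le> X m r)"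
  proof (intro ballI conjI impI)
    fix r m assume r: "r \<in> {t..t+e}" and m: "m \<in> {-N..nn}" "m \<le> 0"
    have "X m r = X m t" "XB m r = XB m t" using e(2) r m by blast+
    moreover have "X m t = XB m t" using IH t m by auto
    ultimately show "X m r = XB m r" by simp
  next
    fix r m assume r: "r \<in> {t..t+e}" and m: "m \<in> {-N..nn}" "1 \<le> m"
    have "X m r = X m t" "XB m r = XB m t" using e(2) r m by blast+
    moreover have "m \<in> {1..nn}" using m by auto
    then have "XA m r = XA m t" using e(2) r by blast
    moreover have "min (XA m t) (XB m t) \<le> X m t" using IH t m by auto
    ultimately show "min (XA m r) (XB m r) \<le> X m r" by simp
  qed
  then show "\<exists>e>0. \<forall>r\<in>{t..t+e}. \<forall>m\<in>{-N..nn}. (m \<le> 0 \<longrightarrow> X m r = XB m r) \<and> (1 \<le> m \<longrightarrow> min (XA m r) (XB m r) \<le> X m r)"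
    using e(1) by blast
qed



theorem proposition2:
  fixes p C t :: real and R L :: "int \<Rightarrow> real set"
    and X XA XB :: "int \<Rightarrow> real \<Rightarrow> int"
  defines "q \<equiv> 1 - p"
  defines "N \<equiv> \<lfloor>(p - q) * (t - C * sqrt t)\<rfloor>"
  assumes "1/2 < p" and "p \<le> 1" and "t > 0" and "N \<ge> 0"
    and "clocks_ok R L"
    and "p = 1 \<Longrightarrow> (\<forall>i. L i = {})"
    and "asep_traj R L {n. n \<ge> -N} (\<lambda>n. if n \<ge> 1 then -n - N else -n) X"
    and "asep_traj R L {n. n \<ge> 1} (\<lambda>n. -n - N) XA"
    and "asep_traj R L {n. n \<ge> -N} (\<lambda>n. -n) XB"
  shows "\<forall>n\<ge>1. \<forall>s\<ge>0.
           (p = 1 \<longrightarrow> min (XA n s) (XB n s) = X n s) \<and>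
           min (XA n s) (XB n s) \<ge> X n s"
proof -
  have ok: "clocks_ok R L" by fact
  have N0: "0 \<le> N" by fact
  have Xt: "asep_traj R L {n. -N \<le> n} (\<lambda>n. if n \<ge> 1 then -n - N else -n) X" using assms by simp
  have At: "asep_traj R L {n. 1 \<le> n} (\<lambda>n. -n - N) XA" using assms by simp
  have Bt: "asep_traj R L {n. -N \<le> n} (\<lambda>n. -n) XB" using assms by simp
  have Lp: "p = 1 \<Longrightarrow> \<forall>i. L i = {}" by fact
  have ordX: "\<forall>n\<ge>-N. (\<lambda>n. if n \<ge> 1 then -n - N else -n) (n+1) < (\<lambda>n. if n \<ge> 1 then -n - N else -n) n"
    using N0 by auto
  have ordA: "\<forall>n\<ge>1. (\<lambda>n. -n - N) (n+1) < (\<lambda>n::int. -n - N) n" by auto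
  have ordB: "\<forall>n\<ge>-N. (\<lambda>n. -n) (n+1) < (\<lambda>n::int. -n) n" by auto
  have harris: "\<exists>i\<le>K. (R i \<union> L (i+1)) \<inter> {0..T} = {}" for K T
    using ok unfolding clocks_ok_def by blast
  have bond: "\<exists>nh i. n \<le> nh \<and> 1 \<le> nh \<and> L (i+1) \<inter> {0..s} = {} \<and>
       (\<forall>r\<in>{0..s}. X (nh+1) r \<le> i \<and> i < X nh r)" if n: "1 \<le> n" and s: "0 \<le> s" for n s
  proof -
    obtain i where i: "i \<le> -n - N - 1" "(R i \<union> L (i+1)) \<inter> {0..s} = {}"
      using harris[of "-n - N - 1" s] by blast
    define nh where "nh = -i - N - 1"
    have nh: "n \<le> nh" "1 \<le> nh" using i n unfolding nh_def by auto
    have c1: "\<forall>r\<in>{0..s}. X (nh+1) r \<le> i"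
      by (rule confine(1)[OF Xt _ s i(2)]) (use nh N0 in \<open>auto simp: nh_def\<close>)
    have c2: "\<forall>r\<in>{0..s}. i < X nh r"
      by (rule confine(2)[OF Xt _ s i(2)]) (use nh N0 in \<open>auto simp: nh_def\<close>)
    have "L (i+1) \<inter> {0..s} = {}" using i(2) by auto
    then show ?thesis using nh c1 c2 by blast
  qed
  have leA: "\<forall>m\<ge>1. \<forall>s\<ge>0. X m s \<le> XA m s"
  proof (intro allI impI)
    fix n :: int and s :: real assume n: "1 \<le> n" and s: "0 \<le> s"
    obtain nh i where b: "n \<le> nh" "1 \<le> nh" "L (i+1) \<inter> {0..s} = {}"
      "\<forall>r\<in>{0..s}. X (nh+1) r \<le> i \<and> i < X nh r" using bond[OF n s] by blast
    have "\<forall>r\<in>{0..s}. \<forall>m\<in>{1..nh}. X m r \<le> XA m r"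
      by (rule compare[OF ok Xt At ordX ordA _ b(2) _ s b(3) b(4)]) (use N0 in auto)
    then show "X n s \<le> XA n s" using n s b by auto
  qed
  have leB: "\<forall>m\<ge>1. \<forall>s\<ge>0. X m s \<le> XB m s"
  proof (intro allI impI)
    fix n :: int and s :: real assume n: "1 \<le> n" and s: "0 \<le> s"
    obtain nh i where b: "n \<le> nh" "1 \<le> nh" "L (i+1) \<inter> {0..s} = {}"
      "\<forall>r\<in>{0..s}. X (nh+1) r \<le> i \<and> i < X nh r" using bond[OF n s] by blast
    have "\<forall>r\<in>{0..s}. \<forall>m\<in>{-N..nh}. X m r \<le> XB m r"
      by (rule compare[OF ok Xt Bt ordX ordB _ _ _ s b(3) b(4)]) (use N0 b in auto)
    then show "X n s \<le> XB n s" using n s b N0 by auto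
  qed
  show ?thesis
  proof (intro allI impI conjI)
    fix n :: int and s :: real assume n: "1 \<le> n" and s: "0 \<le> s"
    show "X n s \<le> min (XA n s) (XB n s)" using leA leB n s by auto
    assume p1: "p = 1"
    have "\<forall>r\<in>{0..s}. \<forall>m\<in>{-N..n}. (m \<le> 0 \<longrightarrow> X m r = XB m r) \<and> (1 \<le> m \<longrightarrow> min (XA m r) (XB m r) \<le> X m r)"
      by (rule tasep_part[OF ok Lp[OF p1] Xt At Bt ordX ordA ordB N0 _ _ leA leB s]) (use N0 in auto)
    then have "min (XA n s) (XB n s) \<le> X n s" using n s N0 by auto
    moreover have "X n s \<le> XA n s" "X n s \<le> XB n s" using leA leB n s by auto
    ultimately show "min (XA n s) (XB n s) = X n s" by linarith
  qed
qed

end
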